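(* If $\nu\ge\tfrac32$, then the function $x\mapsto -\mathcal{K}_\nu'(x)$ is strictly log-concave on $(0,\infty)$.
   Context: For $\nu>0$ define $\mathcal{K}_\nu:(0,\infty)\to(0,\infty)$ by $\mathcal{K}_\nu(x)=2^{\nu-1}\Gamma(\nu)x^\nu K_\nu(x)$, where $K_\nu$ is the modified Bessel function of the second kind (MacDonald function). Note $-\mathcal{K}_\nu'(x)=2^{\nu-1}\Gamma(\nu)x^\nu K_{\nu-1}(x)>0$. *)

theory Defs
  imports "HOL-Analysis.Analysis"
begin

text \<open>Modified Bessel function of the second kind (MacDonald function), via the
standard integral representation valid for x > 0 and real order nu:
  K_nu(x) = integral over t in [0,inf) of exp(-x cosh t) cosh(nu t).\<close>
definition besselK :: "real \<Rightarrow> real \<Rightarrow> real" where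
  "besselK nu x = (LBINT t:{0..}. exp (- x * cosh t) * cosh (nu * t))"

definition calK :: "real \<Rightarrow> real \<Rightarrow> real" where
  "calK nu x = 2 powr (nu - 1) * Gamma nu * x powr nu * besselK nu x"

definition strictly_concave_on :: "real set \<Rightarrow> (real \<Rightarrow> real) \<Rightarrow> bool" where
  "strictly_concave_on S f \<longleftrightarrow>
     (\<forall>x\<in>S. \<forall>y\<in>S. x \<noteq> y \<longrightarrow> (\<forall>u::real. 0 < u \<and> u < 1 \<longrightarrow>
        f ((1 - u) * x + u * y) > (1 - u) * f x + u * f y))"

definition strictly_log_concave_on :: "real set \<Rightarrow> (real \<Rightarrow> real) \<Rightarrow> bool" where
  "strictly_log_concave_on S f \<longleftrightarrow>
     (\<forall>x\<in>S. f x > 0) \<and> strictly_concave_on S (\<lambda>x. ln (f x))"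

end

theory Submission
  imports Defs
begin


lemma cosh_ge_quad: "t \<ge> 0 \<Longrightarrow> 1 + t^2/4 \<le> cosh (t::real)"
proof -
  assume t: "t \<ge> 0"
  have "1 + t + t^2/2 \<le> exp t" using exp_lower_Taylor_quadratic[OF t] by simp
  moreover have "1 + (-t) \<le> exp (-t)" by (rule exp_ge_add_one_self)
  ultimately show ?thesis unfolding cosh_def using t by (simp add: field_simps power2_eq_square)
qed

lemma exp_bound_aux:
  fixes P b t :: real assumes b: "b > 0" and t: "t \<ge> 0"
  shows "exp (P*t - b*cosh t) \<le> exp ((P+1)^2/b - b) * exp (-t)"
proof -
  have "b * (t/2 - (P+1)/b)^2 \<ge> 0" using b by simp
  moreover have "b * (t/2 - (P+1)/b)^2 = b*t^2/4 - (P+1)*t + (P+1)^2/b" using b by (simp add: field_simps power2_eq_square)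
  ultimately have "(P+1)*t - b*t^2/4 \<le> (P+1)^2/b" by linarith
  moreover have "b*cosh t \<ge> b*(1 + t^2/4)" using cosh_ge_quad[OF t] b by simp
  ultimately have "P*t - b*cosh t \<le> (P+1)^2/b - b + (-t)" by (simp add: algebra_simps)
  thus ?thesis by (simp add: exp_add[symmetric])
qed

lemma integrable_exp_minus: "set_integrable lborel {0<..} (\<lambda>t::real. exp (-t))"
proof -
  have "set_integrable lborel (einterval 0 \<infinity>) (\<lambda>t::real. exp (-t))"
  proof (rule interval_integral_FTC_nonneg(1)[where F="\<lambda>t. - exp (-t)" and A="-1" and B=0])
    show "(((\<lambda>t. - exp (-t)) \<circ> real_of_ereal) \<longlongrightarrow> -1) (at_right 0)"
      by (auto simp: zero_ereal_def ereal_tendsto_simps intro!: tendsto_eq_intros)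
    have *: "((\<lambda>t::real. exp (- t)) \<longlongrightarrow> 0) at_top"
      by (auto intro!: exp_at_bot[THEN filterlim_compose] filterlim_ident simp: filterlim_uminus_at_bot)
    show "(((\<lambda>t. - exp (-t)) \<circ> real_of_ereal) \<longlongrightarrow> 0) (at_left \<infinity>)"
      unfolding ereal_tendsto_simps using tendsto_minus[OF *] by simp
  qed (auto intro!: derivative_eq_intros)
  moreover have "einterval 0 \<infinity> = {0::real<..}" by (auto simp: einterval_iff zero_ereal_def)
  ultimately show ?thesis by simp
qed

lemma integrable_exp_cosh:
  fixes P b :: real assumes b: "b > 0"
  shows "set_integrable lborel {0<..} (\<lambda>t. exp (P*t - b*cosh t))"
proof (rule set_integrable_bound[OF set_integrable_mult_right[OF integrable_exp_minus, of "exp ((P+1)^2/b - b)"]])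
  show "set_borel_measurable lborel {0<..} (\<lambda>t. exp (P * t - b * cosh t))"
    unfolding set_borel_measurable_def measurable_lborel2
    by (intro borel_measurable_continuous_on_indicator) (auto intro!: continuous_intros)
  show "AE x in lborel. x \<in> {0<..} \<longrightarrow> norm (exp (P * x - b * cosh x)) \<le> norm (exp ((P + 1)\<^sup>2 / b - b) * exp (- x))"
    using exp_bound_aux[OF b] by auto
qed


definition admissible :: "(real \<Rightarrow> real) \<Rightarrow> bool" where
  "admissible g \<longleftrightarrow> continuous_on UNIV g \<and> (\<exists>C P. \<forall>t. t \<ge> 0 \<longrightarrow> \<bar>g t\<bar> \<le> C * exp (P*t))"

definition LT :: "(real \<Rightarrow> real) \<Rightarrow> real \<Rightarrow> real" where
  "LT g x = (LBINT t:{0<..}. g t * exp (- x * cosh t))"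

lemma admissible_mult:
  assumes "admissible f" "admissible g" shows "admissible (\<lambda>t. f t * g t)"
proof -
  obtain C1 P1 where 1: "\<forall>t. t \<ge> 0 \<longrightarrow> \<bar>f t\<bar> \<le> C1 * exp (P1*t)" using assms(1) unfolding admissible_def by auto
  obtain C2 P2 where 2: "\<forall>t. t \<ge> 0 \<longrightarrow> \<bar>g t\<bar> \<le> C2 * exp (P2*t)" using assms(2) unfolding admissible_def by auto
  have "\<forall>t. t \<ge> 0 \<longrightarrow> \<bar>f t * g t\<bar> \<le> (C1*C2) * exp ((P1+P2)*t)"
  proof (intro allI impI)
    fix t :: real assume t: "t \<ge> 0"
    have "\<bar>f t * g t\<bar> = \<bar>f t\<bar> * \<bar>g t\<bar>" by (simp add: abs_mult)
    also have "\<dots> \<le> (C1 * exp (P1*t)) * (C2 * exp (P2*t))"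
      using 1 2 t by (intro mult_mono) auto
    also have "\<dots> = (C1*C2) * exp ((P1+P2)*t)" by (simp add: distrib_right exp_add)
    finally show "\<bar>f t * g t\<bar> \<le> (C1*C2) * exp ((P1+P2)*t)" .
  qed
  moreover have "continuous_on UNIV (\<lambda>t. f t * g t)"
    using assms unfolding admissible_def by (auto intro!: continuous_intros)
  ultimately show ?thesis unfolding admissible_def by blast
qed

lemma admissible_add:
  assumes "admissible f" "admissible g" shows "admissible (\<lambda>t. f t + g t)"
proof -
  obtain C1 P1 where 1: "\<forall>t. t \<ge> 0 \<longrightarrow> \<bar>f t\<bar> \<le> C1 * exp (P1*t)" using assms(1) unfolding admissible_def by auto
  obtain C2 P2 where 2: "\<forall>t. t \<ge> 0 \<longrightarrow> \<bar>g t\<bar> \<le> C2 * exp (P2*t)" using assms(2) unfolding admissible_def by auto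
  define P where "P = max \<bar>P1\<bar> \<bar>P2\<bar>"
  have "\<forall>t. t \<ge> 0 \<longrightarrow> \<bar>f t + g t\<bar> \<le> (\<bar>C1\<bar>+\<bar>C2\<bar>) * exp (P*t)"
  proof (intro allI impI)
    fix t :: real assume t: "t \<ge> 0"
    have e1: "exp (P1*t) \<le> exp (P*t)" using t unfolding P_def by (intro exp_mono mult_right_mono) auto
    have e2: "exp (P2*t) \<le> exp (P*t)" using t unfolding P_def by (intro exp_mono mult_right_mono) auto
    have a: "C1 * exp (P1*t) \<le> \<bar>C1\<bar> * exp (P*t)"
      using e1 by (meson abs_ge_self abs_ge_zero exp_ge_zero mult_left_mono mult_right_mono order_trans)
    have b: "C2 * exp (P2*t) \<le> \<bar>C2\<bar> * exp (P*t)"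
      using e2 by (meson abs_ge_self abs_ge_zero exp_ge_zero mult_left_mono mult_right_mono order_trans)
    have "\<bar>f t + g t\<bar> \<le> \<bar>f t\<bar> + \<bar>g t\<bar>" by (rule abs_triangle_ineq)
    also have "\<dots> \<le> \<bar>C1\<bar> * exp (P*t) + \<bar>C2\<bar> * exp (P*t)" using 1 2 t a b by (meson add_mono order_trans)
    finally show "\<bar>f t + g t\<bar> \<le> (\<bar>C1\<bar>+\<bar>C2\<bar>) * exp (P*t)" by (simp add: distrib_right)
  qed
  moreover have "continuous_on UNIV (\<lambda>t. f t + g t)"
    using assms unfolding admissible_def by (auto intro!: continuous_intros)
  ultimately show ?thesis unfolding admissible_def by blast
qed

lemma admissible_const: "admissible (\<lambda>t. c)"
proof -
  have "\<forall>t. t \<ge> 0 \<longrightarrow> \<bar>c\<bar> \<le> \<bar>c\<bar> * exp (0*t)" by simp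
  thus ?thesis unfolding admissible_def by (blast intro: continuous_on_const)
qed

lemma admissible_cmult: "admissible g \<Longrightarrow> admissible (\<lambda>t. c * g t)"
  using admissible_mult[OF admissible_const] by blast

lemma cosh_le_exp: "t \<ge> 0 \<Longrightarrow> cosh t \<le> exp (t::real)"
proof -
  assume "t \<ge> 0"
  hence "exp (-t) \<le> exp t" by simp
  thus ?thesis unfolding cosh_def by simp
qed

lemma admissible_cosh: "admissible (\<lambda>t. cosh (a*t))"
proof -
  have "\<bar>cosh (a*t)\<bar> \<le> 1 * exp (\<bar>a\<bar>*t)" if "t \<ge> 0" for t
  proof -
    have "\<bar>cosh (a*t)\<bar> = cosh (\<bar>a\<bar>*t)" using that by (simp add: abs_mult)
    also have "\<dots> \<le> exp (\<bar>a\<bar>*t)" using that by (intro cosh_le_exp) simp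
    finally show ?thesis by simp
  qed
  hence "\<forall>t. t \<ge> 0 \<longrightarrow> \<bar>cosh (a*t)\<bar> \<le> 1 * exp (\<bar>a\<bar>*t)" by blast
  moreover have "continuous_on UNIV (\<lambda>t. cosh (a*t))" by (intro continuous_intros)
  ultimately show ?thesis unfolding admissible_def by blast
qed

lemma abs_sinh_le_cosh: "\<bar>sinh (y::real)\<bar> \<le> cosh y"
proof -
  have "\<bar>exp y - exp (-y)\<bar> \<le> exp y + exp (-y)" using exp_gt_zero[of y] exp_gt_zero[of "-y"] by (simp add: abs_le_iff)
  thus ?thesis unfolding sinh_def cosh_def by simp
qed

lemma admissible_sinh: "admissible (\<lambda>t. sinh (a*t))"
proof -
  obtain C P where CP: "\<forall>t. t \<ge> 0 \<longrightarrow> \<bar>cosh (a*t)\<bar> \<le> C * exp (P*t)" using admissible_cosh[of a] unfolding admissible_def by auto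
  have "\<forall>t. t \<ge> 0 \<longrightarrow> \<bar>sinh (a*t)\<bar> \<le> C * exp (P*t)"
    using CP abs_sinh_le_cosh by (meson abs_ge_self order_trans)
  thus ?thesis unfolding admissible_def by (auto intro!: continuous_intros)
qed

lemma admissible_integrable:
  assumes g: "admissible g" and b: "b > 0"
  shows "set_integrable lborel {0<..} (\<lambda>t. g t * exp (- b * cosh t))"
proof -
  obtain C P where CP: "\<forall>t. t \<ge> 0 \<longrightarrow> \<bar>g t\<bar> \<le> C * exp (P*t)" using g unfolding admissible_def by auto
  show ?thesis
  proof (rule set_integrable_bound[OF set_integrable_mult_right[OF integrable_exp_cosh[OF b, of P], of C]])
    show "set_borel_measurable lborel {0<..} (\<lambda>t. g t * exp (- b * cosh t))"
      unfolding set_borel_measurable_def measurable_lborel2 using g unfolding admissible_def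
      by (intro borel_measurable_continuous_on_indicator) (auto intro!: continuous_intros elim: continuous_on_subset)
    show "AE t in lborel. t \<in> {0<..} \<longrightarrow> norm (g t * exp (- b * cosh t)) \<le> norm (C * exp (P * t - b * cosh t))"
    proof (rule AE_I2, intro impI)
      fix t :: real assume "t \<in> {0<..}"
      hence t: "t \<ge> 0" by simp
      have "norm (g t * exp (- b * cosh t)) = \<bar>g t\<bar> * exp (- b * cosh t)" by (simp add: abs_mult)
      also have "\<dots> \<le> C * exp (P*t) * exp (- b * cosh t)" using CP t by (intro mult_right_mono) auto
      also have "\<dots> = C * exp (P * t - b * cosh t)" by (simp add: exp_diff exp_minus field_simps)
      also have "\<dots> \<le> norm (C * exp (P * t - b * cosh t))" by simp
      finally show "norm (g t * exp (- b * cosh t)) \<le> norm (C * exp (P * t - b * cosh t))" .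
    qed
  qed
qed


lemma abs_exp_sub_one: "\<bar>exp (u::real) - 1\<bar> \<le> \<bar>u\<bar> * exp \<bar>u\<bar>"
proof (cases "u \<ge> 0")
  case True
  have "1 + (-u) \<le> exp (-u)" using exp_ge_add_one_self[of "-u"] by simp
  hence "(1 - u) * exp u \<le> exp (-u) * exp u" by (intro mult_right_mono) auto
  hence "(1 - u) * exp u \<le> 1" by (simp add: exp_minus)
  moreover have "exp u \<ge> 1" using True by simp
  ultimately show ?thesis using True by (simp add: algebra_simps)
next
  case False
  have a: "1 + u \<le> exp u" by (rule exp_ge_add_one_self)
  have "exp (-u) \<ge> 1" using False by simp
  hence b: "-u * 1 \<le> -u * exp (-u)" using False by (intro mult_left_mono) auto
  show ?thesis using False a b by (simp add: abs_if, linarith)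
qed

lemma exp_diff_bound:
  fixes x y c :: real assumes c: "c \<ge> 0" and d: "\<bar>y - x\<bar> \<le> x/2"
  shows "\<bar>exp (- y * c) - exp (- x * c)\<bar> \<le> \<bar>y - x\<bar> * c * exp (- (x/2) * c)"
proof -
  have "exp (- y * c) - exp (- x * c) = exp (- x * c) * (exp (-(y - x) * c) - 1)"
    by (simp add: algebra_simps exp_add[symmetric])
  hence "\<bar>exp (- y * c) - exp (- x * c)\<bar> = exp (- x * c) * \<bar>exp (-(y - x) * c) - 1\<bar>" by (simp add: abs_mult)
  also have "\<dots> \<le> exp (- x * c) * (\<bar>-(y - x) * c\<bar> * exp \<bar>-(y - x) * c\<bar>)"
    by (intro mult_left_mono abs_exp_sub_one) auto
  also have "\<dots> = \<bar>y - x\<bar> * c * exp (- x * c + \<bar>y - x\<bar> * c)" using c by (simp add: abs_mult exp_add[symmetric] abs_minus_commute mult_ac)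
  also have "\<dots> \<le> \<bar>y - x\<bar> * c * exp (- (x/2) * c)"
  proof -
    have "- x * c + \<bar>y - x\<bar> * c \<le> - (x/2) * c" using mult_right_mono[OF d c] by (simp add: algebra_simps)
    thus ?thesis using c by (intro mult_left_mono) auto
  qed
  finally show ?thesis .
qed


lemma LT_deriv:
  assumes g: "admissible g" and x: "x > 0"
  shows "(LT g has_real_derivative - LT (\<lambda>t. g t * cosh t) x) (at x)"
proof -
  obtain C P where CP: "\<forall>t. t \<ge> 0 \<longrightarrow> \<bar>g t\<bar> \<le> C * exp (P*t)" using g unfolding admissible_def by auto
  have gc: "continuous_on UNIV g" using g unfolding admissible_def by auto
  have C0: "C \<ge> 0" using CP[rule_format, of 0] by auto
  define \<delta> where "\<delta> = x/2"
  have \<delta>: "\<delta> > 0" using x unfolding \<delta>_def by auto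
  define w where "w t = indicator {0<..} t *\<^sub>R (C * exp ((P+1)*t - \<delta>*cosh t))" for t :: real
  have wint: "integrable lborel w"
    using set_integrable_mult_right[OF integrable_exp_cosh[OF \<delta>, of "P+1"], of C]
    unfolding w_def set_integrable_def by simp
  define D where "D = - LT (\<lambda>t. g t * cosh t) x"
  define f where "f t = indicator {0<..} t *\<^sub>R (g t * (- cosh t * exp (- x * cosh t)))" for t :: real
  have intf: "\<And>y. y > 0 \<Longrightarrow> set_integrable lborel {0<..} (\<lambda>t. g t * exp (- y * cosh t))"
    using admissible_integrable[OF g] by blast
  have Dint: "D = integral\<^sup>L lborel f"
    unfolding D_def f_def LT_def set_lebesgue_integral_def
    by (simp add: algebra_simps integral_minus[symmetric] del: integral_minus)
  have "((\<lambda>y. (LT g y - LT g x) / (y - x)) \<longlongrightarrow> D) (at x)"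
    unfolding tendsto_at_iff_sequentially comp_def
  proof (intro allI impI)
    fix Y :: "nat \<Rightarrow> real" assume Yne: "\<forall>i. Y i \<in> UNIV - {x}" and Yx: "Y \<longlonglongrightarrow> x"
    from Yx have "eventually (\<lambda>i. dist (Y i) x < \<delta>) sequentially" using \<delta> by (rule tendstoD)
    then obtain N where N: "\<And>i. i \<ge> N \<Longrightarrow> \<bar>Y i - x\<bar> < \<delta>" unfolding eventually_sequentially dist_real_def by auto
    define Z where "Z i = Y (i + N)" for i
    have Zd: "\<bar>Z i - x\<bar> < \<delta>" for i using N[of "i+N"] unfolding Z_def by simp
    have Zne: "Z i \<noteq> x" for i using Yne unfolding Z_def by auto
    have Zpos: "Z i > 0" for i using Zd[of i] x unfolding \<delta>_def abs_less_iff by linarith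
    have Zx: "Z \<longlonglongrightarrow> x" unfolding Z_def by (rule LIMSEQ_ignore_initial_segment[OF Yx])
    define s where "s i t = indicator {0<..} t *\<^sub>R (g t * ((exp (- Z i * cosh t) - exp (- x * cosh t)) / (Z i - x)))" for i t
    have meas_s: "s i \<in> borel_measurable lborel" for i
      unfolding s_def measurable_lborel2
      by (intro borel_measurable_continuous_on_indicator) (auto intro!: continuous_intros gc[THEN continuous_on_subset] simp: Zne)
    have meas_f: "f \<in> borel_measurable lborel"
      unfolding f_def measurable_lborel2
      by (intro borel_measurable_continuous_on_indicator) (auto intro!: continuous_intros gc[THEN continuous_on_subset])
    have lim: "AE t in lborel. (\<lambda>i. s i t) \<longlonglongrightarrow> f t"
    proof (rule AE_I2)
      fix t :: real
      have "((\<lambda>y. exp (- y * cosh t)) has_real_derivative (- cosh t * exp (- x * cosh t))) (at x)"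
        by (auto intro!: derivative_eq_intros)
      hence 1: "((\<lambda>y. (exp (- y * cosh t) - exp (- x * cosh t)) / (y - x)) \<longlongrightarrow> - cosh t * exp (- x * cosh t)) (at x)"
        unfolding has_field_derivative_iff by simp
      have 2: "filterlim Z (at x) sequentially"
        by (rule filterlim_atI[OF Zx]) (use Zne in auto)
      have "(\<lambda>i. (exp (- Z i * cosh t) - exp (- x * cosh t)) / (Z i - x)) \<longlonglongrightarrow> - cosh t * exp (- x * cosh t)"
        by (rule filterlim_compose[OF 1 2])
      thus "(\<lambda>i. s i t) \<longlonglongrightarrow> f t" unfolding s_def f_def by (intro tendsto_intros)
    qed
    have bound: "AE t in lborel. norm (s i t) \<le> w t" for i
    proof (rule AE_I2)
      fix t :: real
      show "norm (s i t) \<le> w t"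
      proof (cases "t > 0")
        case False thus ?thesis unfolding s_def w_def by simp
      next
        case True
        have c0: "cosh t \<ge> 0" using cosh_real_ge_1[of t] by linarith
        have ne: "\<bar>Z i - x\<bar> > 0" using Zne[of i] by simp
        have "\<bar>exp (- Z i * cosh t) - exp (- x * cosh t)\<bar> \<le> \<bar>Z i - x\<bar> * cosh t * exp (- \<delta> * cosh t)"
          using exp_diff_bound[OF c0, of "Z i" x] Zd[of i] unfolding \<delta>_def by simp
        hence q: "\<bar>(exp (- Z i * cosh t) - exp (- x * cosh t)) / (Z i - x)\<bar> \<le> cosh t * exp (- \<delta> * cosh t)"
          using ne by (simp add: abs_divide divide_le_eq mult.commute mult.left_commute)
        have "norm (s i t) = \<bar>g t\<bar> * \<bar>(exp (- Z i * cosh t) - exp (- x * cosh t)) / (Z i - x)\<bar>"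
          unfolding s_def using True by (simp add: abs_mult)
        also have "\<dots> \<le> (C * exp (P*t)) * (cosh t * exp (- \<delta> * cosh t))"
          using CP True q by (intro mult_mono) auto
        also have "\<dots> \<le> (C * exp (P*t)) * (exp t * exp (- \<delta> * cosh t))"
          using C0 True cosh_le_exp[of t] by (intro mult_left_mono mult_right_mono) auto
        also have "\<dots> = w t" unfolding w_def using True by (simp add: exp_add[symmetric] algebra_simps)
        finally show ?thesis .
      qed
    qed
    have conv: "(\<lambda>i. integral\<^sup>L lborel (s i)) \<longlonglongrightarrow> integral\<^sup>L lborel f"
      by (rule integral_dominated_convergence[OF meas_f meas_s wint lim bound])
    have eq: "integral\<^sup>L lborel (s i) = (LT g (Z i) - LT g x) / (Z i - x)" for i
    proof -
      have "LT g (Z i) - LT g x = (LBINT t:{0<..}. g t * exp (- Z i * cosh t) - g t * exp (- x * cosh t))"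
        unfolding LT_def by (rule set_integral_diff(2)[symmetric, OF intf[OF Zpos] intf[OF x]])
      also have "\<dots> = (LBINT t:{0<..}. g t * (exp (- Z i * cosh t) - exp (- x * cosh t)))"
        by (simp add: algebra_simps)
      finally have "(LT g (Z i) - LT g x) / (Z i - x) = (LBINT t:{0<..}. g t * (exp (- Z i * cosh t) - exp (- x * cosh t))) / (Z i - x)" by simp
      also have "\<dots> = integral\<^sup>L lborel (s i)"
        unfolding s_def set_lebesgue_integral_def by (simp add: integral_divide_zero[symmetric] del: integral_divide_zero)
      finally show ?thesis by simp
    qed
    have "(\<lambda>i. (LT g (Z i) - LT g x) / (Z i - x)) \<longlonglongrightarrow> D"
      using conv unfolding eq Dint .
    thus "(\<lambda>i. (LT g (Y i) - LT g x) / (Y i - x)) \<longlonglongrightarrow> D"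
      unfolding Z_def by (rule LIMSEQ_offset)
  qed
  thus ?thesis unfolding has_field_derivative_iff D_def .
qed


lemma LT_cmult: "LT (\<lambda>t. c * g t) x = c * LT g x"
  unfolding LT_def by (simp add: mult.assoc)

lemma LT_add:
  assumes "admissible f" "admissible g" "x > 0"
  shows "LT (\<lambda>t. f t + g t) x = LT f x + LT g x"
  unfolding LT_def using admissible_integrable[OF assms(1,3)] admissible_integrable[OF assms(2,3)]
  by (simp add: distrib_right)

lemma LT_diff:
  assumes "admissible f" "admissible g" "x > 0"
  shows "LT (\<lambda>t. f t - g t) x = LT f x - LT g x"
  unfolding LT_def using admissible_integrable[OF assms(1,3)] admissible_integrable[OF assms(2,3)]
  by (simp add: left_diff_distrib)

lemma LT_mono:
  assumes "admissible f" "admissible g" "x > 0" "\<And>t. t > 0 \<Longrightarrow> f t \<le> g t"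
  shows "LT f x \<le> LT g x"
  unfolding LT_def using admissible_integrable[OF assms(1,3)] admissible_integrable[OF assms(2,3)] assms(4)
  by (intro set_integral_mono) (auto intro!: mult_right_mono)

lemma admissible_sinh1: "admissible sinh"
  using admissible_sinh[of 1] by simp

lemma admissible_cosh1: "admissible cosh"
  using admissible_cosh[of 1] by simp

lemma LT_ibp:
  assumes G: "admissible G" and G': "admissible G'" and dG: "\<And>t. (G has_real_derivative G' t) (at t)"
    and G0: "G 0 = 0" and x: "x > 0"
  shows "LT G' x = x * LT (\<lambda>t. sinh t * G t) x"
proof -
  have aSG: "admissible (\<lambda>t. sinh t * G t)" by (rule admissible_mult[OF admissible_sinh1 G])
  define f where "f t = G' t * exp (- x * cosh t) - x * (sinh t * G t * exp (- x * cosh t))" for t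
  define F where "F t = G t * exp (- x * cosh t)" for t
  have cG: "continuous_on UNIV G" and cG': "continuous_on UNIV G'" using G G' unfolding admissible_def by auto
  have int1: "set_integrable lborel {0<..} (\<lambda>t. G' t * exp (- x * cosh t))" by (rule admissible_integrable[OF G' x])
  have int2: "set_integrable lborel {0<..} (\<lambda>t. sinh t * G t * exp (- x * cosh t))" by (rule admissible_integrable[OF aSG x])
  have fint: "set_integrable lborel {0<..} f"
    unfolding f_def using int1 set_integrable_mult_right[OF int2, of x] by (intro set_integral_diff(1))
  have "(LBINT t=0..\<infinity>. f t) = 0 - 0"
  proof (rule interval_integral_FTC_integrable[where F=F])
    show "(0::ereal) < \<infinity>" by simp
    fix t assume "0 < ereal t" "ereal t < \<infinity>"
    have "(F has_real_derivative (G' t * exp (- x * cosh t) + G t * (exp (- x * cosh t) * (- x * sinh t)))) (at t)"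
      unfolding F_def by (intro derivative_eq_intros dG) (auto simp: dG)
    moreover have "G' t * exp (- x * cosh t) + G t * (exp (- x * cosh t) * (- x * sinh t)) = f t"
      unfolding f_def by (simp add: algebra_simps)
    ultimately show "(F has_vector_derivative f t) (at t)"
      by (simp add: has_real_derivative_iff_has_vector_derivative)
    show "isCont f t" unfolding f_def
      using cG cG' by (auto intro!: continuous_intros simp: continuous_on_eq_continuous_at)
  next
    show "set_integrable lborel (einterval 0 \<infinity>) f"
    proof -
      have "einterval 0 \<infinity> = {0::real<..}" by (auto simp: einterval_iff zero_ereal_def)
      thus ?thesis using fint by simp
    qed
  next
    have "continuous_on UNIV F" unfolding F_def by (intro continuous_intros cG)
    hence "isCont F 0" by (simp add: continuous_on_eq_continuous_at)
    hence "(F \<longlongrightarrow> F 0) (at 0)" by (simp add: isCont_def)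
    hence "(F \<longlongrightarrow> F 0) (at_right 0)" by (simp add: filterlim_at_split)
    thus "((F \<circ> real_of_ereal) \<longlongrightarrow> 0) (at_right 0)"
      using G0 unfolding F_def by (simp add: zero_ereal_def ereal_tendsto_simps)
  next
    obtain C P where CP: "\<forall>t. t \<ge> 0 \<longrightarrow> \<bar>G t\<bar> \<le> C * exp (P*t)" using G unfolding admissible_def by auto
    define K where "K = C * exp ((P+1)^2/x - x)"
    have ev: "eventually (\<lambda>t. norm (F t) \<le> K * exp (- t)) at_top"
      unfolding eventually_at_top_linorder
    proof (intro exI[of _ 0] allI impI)
      fix t :: real assume t: "t \<ge> 0"
      have "norm (F t) = \<bar>G t\<bar> * exp (- x * cosh t)" unfolding F_def by (simp add: abs_mult)
      also have "\<dots> \<le> C * exp (P*t) * exp (- x * cosh t)" using CP t by (intro mult_right_mono) auto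
      also have "\<dots> = C * exp (P * t - x * cosh t)" by (simp add: exp_diff exp_minus field_simps)
      also have "\<dots> \<le> C * (exp ((P+1)^2/x - x) * exp (-t))"
        using exp_bound_aux[OF x t, of P] CP t by (intro mult_left_mono) (auto intro: order_trans[OF abs_ge_zero])
      finally show "norm (F t) \<le> K * exp (- t)" unfolding K_def by (simp add: mult.assoc)
    qed
    have "((\<lambda>t::real. exp (- t)) \<longlongrightarrow> 0) at_top"
      by (auto intro!: exp_at_bot[THEN filterlim_compose] filterlim_ident simp: filterlim_uminus_at_bot)
    hence "((\<lambda>t. K * exp (- t)) \<longlongrightarrow> 0) at_top" using tendsto_mult_right_zero by blast
    hence "(F \<longlongrightarrow> 0) at_top" by (rule Lim_null_comparison[OF ev])
    thus "((F \<circ> real_of_ereal) \<longlongrightarrow> 0) (at_left \<infinity>)" unfolding ereal_tendsto_simps .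
  qed
  hence "(LBINT t:{0<..}. f t) = 0" by (simp add: interval_lebesgue_integral_0_infty)
  moreover have "(LBINT t:{0<..}. f t) = LT G' x - x * LT (\<lambda>t. sinh t * G t) x"
    unfolding f_def LT_def using int1 set_integrable_mult_right[OF int2, of x]
    by (simp add: mult.assoc)
  ultimately show ?thesis by simp
qed


lemma LT_pos:
  assumes g: "admissible g" and gp: "\<And>t. t > 0 \<Longrightarrow> g t > 0" and x: "x > 0"
  shows "LT g x > 0"
proof -
  define h where "h t = indicator {0<..} t *\<^sub>R (g t * exp (- x * cosh t))" for t :: real
  have int: "integrable lborel h" using admissible_integrable[OF g x] unfolding set_integrable_def h_def .
  have hpos: "t > 0 \<Longrightarrow> h t > 0" for t using gp[of t] unfolding h_def by simp
  have h_nn: "0 \<le> h t" for t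
  proof (cases "t > 0")
    case True thus ?thesis using hpos[OF True] by simp
  next
    case False thus ?thesis by (simp add: h_def)
  qed
  have nn: "AE t in lborel. 0 \<le> h t" using h_nn by simp
  have LTeq: "LT g x = integral\<^sup>L lborel h" unfolding LT_def set_lebesgue_integral_def h_def ..
  have ge: "LT g x \<ge> 0" unfolding LTeq using nn by (rule integral_nonneg_AE)
  have "LT g x \<noteq> 0"
  proof
    assume "LT g x = 0"
    hence "AE t in lborel. h t = 0" unfolding LTeq using integral_nonneg_eq_0_iff_AE[OF int nn] by simp
    hence "AE t in lborel. t \<notin> {0<..1::real}"
      by (rule AE_mp) (auto intro!: AE_I2 dest: hpos)
    moreover have "{t \<in> space lborel. \<not> (t \<notin> {0<..1::real})} = {0<..1}" by auto
    ultimately have "emeasure lborel {0<..1::real} = 0"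
      using AE_iff_measurable[of "{0<..1::real}" lborel "\<lambda>t. t \<notin> {0<..1::real}"] by simp
    thus False by simp
  qed
  with ge show ?thesis by simp
qed

lemma admissible_pow: "admissible f \<Longrightarrow> admissible (\<lambda>t. f t ^ k)"
proof (induction k)
  case 0 thus ?case using admissible_const[of 1] by simp
next
  case (Suc k) thus ?case using admissible_mult[OF Suc.prems Suc.IH] by simp
qed

definition J :: "real \<Rightarrow> nat \<Rightarrow> real \<Rightarrow> real" where
  "J a k x = LT (\<lambda>t. cosh t ^ k * cosh (a*t)) x"

definition S :: "real \<Rightarrow> real \<Rightarrow> real" where
  "S a x = LT (\<lambda>t. sinh t * sinh (a*t)) x"

lemma admissible_J: "admissible (\<lambda>t. cosh t ^ k * cosh (a*t))"
  by (intro admissible_mult admissible_pow admissible_cosh1 admissible_cosh)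

lemma admissible_S: "admissible (\<lambda>t. sinh t * sinh (a*t))"
  by (intro admissible_mult admissible_sinh1 admissible_sinh)

lemma J_deriv: "x > 0 \<Longrightarrow> (J a k has_real_derivative - J a (Suc k) x) (at x)"
proof -
  assume x: "x > 0"
  have "J a k = LT (\<lambda>t. cosh t ^ k * cosh (a*t))" by (rule ext) (simp add: J_def)
  moreover have "LT (\<lambda>t. cosh t ^ k * cosh (a*t) * cosh t) x = J a (Suc k) x"
    unfolding J_def by (simp add: mult_ac)
  ultimately show ?thesis using LT_deriv[OF admissible_J x, of k a] by simp
qed

lemma J_pos: "x > 0 \<Longrightarrow> J a k x > 0"
  unfolding J_def by (rule LT_pos[OF admissible_J]) (auto intro: cosh_real_pos)

lemma I1: "x > 0 \<Longrightarrow> a * J a 0 x = x * S a x"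
proof -
  assume x: "x > 0"
  have "LT (\<lambda>t. a * cosh (a*t)) x = x * LT (\<lambda>t. sinh t * sinh (a*t)) x"
    by (rule LT_ibp[OF admissible_sinh admissible_cmult[OF admissible_cosh]])
       (auto intro!: derivative_eq_intros x)
  thus ?thesis unfolding J_def S_def LT_cmult by simp
qed

lemma I2: "x > 0 \<Longrightarrow> J a 1 x + a * S a x = x * (J a 2 x - J a 0 x)"
proof -
  assume x: "x > 0"
  have "LT (\<lambda>t. cosh t * cosh (a*t) + a * (sinh t * sinh (a*t))) x
      = x * LT (\<lambda>t. sinh t * (sinh t * cosh (a*t))) x"
    by (rule LT_ibp[OF admissible_mult[OF admissible_sinh1 admissible_cosh]
          admissible_add[OF admissible_mult[OF admissible_cosh1 admissible_cosh] admissible_cmult[OF admissible_S]]])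
       (auto intro!: derivative_eq_intros x simp: algebra_simps)
  moreover have "LT (\<lambda>t. cosh t * cosh (a*t) + a * (sinh t * sinh (a*t))) x = J a 1 x + a * S a x"
    using LT_add[OF admissible_mult[OF admissible_cosh1 admissible_cosh] admissible_cmult[OF admissible_S] x]
    unfolding J_def S_def LT_cmult by simp
  moreover have "LT (\<lambda>t. sinh t * (sinh t * cosh (a*t))) x = J a 2 x - J a 0 x"
  proof -
    have "(\<lambda>t. sinh t * (sinh t * cosh (a*t))) = (\<lambda>t. cosh t ^ 2 * cosh (a*t) - cosh t ^ 0 * cosh (a*t))"
    proof (rule ext)
      fix t :: real
      have "sinh t * sinh t = cosh t * cosh t - 1" using sinh_square_eq[of t] by (simp add: power2_eq_square)
      hence "sinh t * (sinh t * cosh (a*t)) = (cosh t * cosh t - 1) * cosh (a*t)" by (metis mult.assoc)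
      thus "sinh t * (sinh t * cosh (a*t)) = cosh t ^ 2 * cosh (a*t) - cosh t ^ 0 * cosh (a*t)"
        by (simp add: power2_eq_square algebra_simps)
    qed
    moreover have "LT (\<lambda>t. cosh t ^ 2 * cosh (a*t) - cosh t ^ 0 * cosh (a*t)) x = J a 2 x - J a 0 x"
      unfolding J_def by (rule LT_diff[OF admissible_J admissible_J x])
    ultimately show ?thesis by simp
  qed
  ultimately show ?thesis by simp
qed

lemma J2_eq: "x > 0 \<Longrightarrow> J a 2 x = J a 1 x / x + J a 0 x + a^2 * J a 0 x / x^2"
proof -
  assume x: "x > 0"
  have s: "S a x = a * J a 0 x / x" using I1[OF x, of a] x by (simp add: field_simps)
  have "J a 1 x + a * (a * J a 0 x / x) = x * (J a 2 x - J a 0 x)" using I2[OF x, of a] s by simp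
  thus ?thesis using x by (simp add: field_simps power2_eq_square)
qed


lemma besselK_J: "besselK a x = J a 0 x"
proof -
  have "besselK a x = integral\<^sup>L lborel (\<lambda>t. indicator {0..} t *\<^sub>R (exp (- x * cosh t) * cosh (a * t)))"
    unfolding besselK_def set_lebesgue_integral_def ..
  also have "\<dots> = integral\<^sup>L lborel (\<lambda>t. indicator {0<..} t *\<^sub>R (cosh t ^ 0 * cosh (a*t) * exp (- x * cosh t)))"
  proof (rule integral_cong_AE)
    show "(\<lambda>t. indicator {0..} t *\<^sub>R (exp (- x * cosh t) * cosh (a * t))) \<in> borel_measurable lborel"
      unfolding measurable_lborel2
      by (intro borel_measurable_continuous_on_indicator) (auto intro!: continuous_intros)
    show "(\<lambda>t. indicator {0<..} t *\<^sub>R (cosh t ^ 0 * cosh (a*t) * exp (- x * cosh t))) \<in> borel_measurable lborel"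
      unfolding measurable_lborel2
      by (intro borel_measurable_continuous_on_indicator) (auto intro!: continuous_intros)
    show "AE t in lborel. indicator {0..} t *\<^sub>R (exp (- x * cosh t) * cosh (a * t)) =
        indicator {0<..} t *\<^sub>R (cosh t ^ 0 * cosh (a*t) * exp (- x * cosh t))"
      using AE_lborel_singleton[of "0::real"] by eventually_elim (auto simp: indicator_def)
  qed
  also have "\<dots> = J a 0 x" unfolding J_def LT_def set_lebesgue_integral_def ..
  finally show ?thesis .
qed

lemma calK_eq: "calK nu = (\<lambda>x. (2 powr (nu - 1) * Gamma nu) * x powr nu * J nu 0 x)"
  by (rule ext) (simp add: calK_def besselK_J)

lemma neg_deriv_calK:
  assumes x: "x > 0"
  shows "- deriv (calK nu) x = (2 powr (nu - 1) * Gamma nu) * x powr nu * J (nu - 1) 0 x"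
proof -
  define c where "c = 2 powr (nu - 1) * Gamma nu"
  have d: "(calK nu has_real_derivative c * (nu * x powr (nu - 1) * J nu 0 x + x powr nu * (- J nu 1 x))) (at x)"
    unfolding calK_eq c_def[symmetric]
    by (rule derivative_eq_intros DERIV_powr J_deriv[OF x] x | simp add: algebra_simps)+
  hence "deriv (calK nu) x = c * (nu * x powr (nu - 1) * J nu 0 x + x powr nu * (- J nu 1 x))"
    by (rule DERIV_imp_deriv)
  also have "nu * x powr (nu - 1) * J nu 0 x = x powr (nu - 1) * (x * S nu x)"
    using I1[OF x, of nu] by simp
  also have "x powr (nu - 1) * (x * S nu x) = x powr nu * S nu x"
    using x by (simp add: powr_diff field_simps)
  finally have "- deriv (calK nu) x = c * x powr nu * (J nu 1 x - S nu x)" by (simp add: algebra_simps)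
  also have "J nu 1 x - S nu x = J (nu - 1) 0 x"
  proof -
    have "J nu 1 x - S nu x = LT (\<lambda>t. cosh t ^ 1 * cosh (nu*t) - sinh t * sinh (nu*t)) x"
      unfolding J_def S_def by (rule LT_diff[OF admissible_J admissible_S x, symmetric])
    also have "(\<lambda>t. cosh t ^ 1 * cosh (nu*t) - sinh t * sinh (nu*t)) = (\<lambda>t. cosh t ^ 0 * cosh ((nu - 1)*t))"
    proof (rule ext)
      fix t
      have "cosh ((nu - 1)*t) = cosh (nu*t - t)" by (simp add: algebra_simps)
      also have "\<dots> = cosh (nu*t) * cosh t - sinh (nu*t) * sinh t" by (rule cosh_diff)
      finally show "cosh t ^ 1 * cosh (nu*t) - sinh t * sinh (nu*t) = cosh t ^ 0 * cosh ((nu - 1)*t)"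
        by (simp add: mult.commute)
    qed
    finally show ?thesis unfolding J_def .
  qed
  finally show ?thesis unfolding c_def .
qed


lemma no_upcross_aux:
  fixes F F' :: "real \<Rightarrow> real"
  assumes der: "\<And>x. x \<in> {a..b} \<Longrightarrow> (F has_real_derivative F' x) (at x)"
    and neg: "\<And>x. x \<in> {a..b} \<Longrightarrow> F x = 0 \<Longrightarrow> F' x < 0"
    and Fa: "F a \<le> 0" and y: "y \<in> {a..b}"
  shows "F y \<le> 0"
proof (rule ccontr)
  assume Fy: "\<not> F y \<le> 0"
  have ay: "a \<le> y" using y by auto
  have cont: "continuous_on {a..y} F"
  proof (intro continuous_at_imp_continuous_on ballI)
    fix x assume "x \<in> {a..y}"
    hence "x \<in> {a..b}" using y by auto
    thus "isCont F x" by (rule DERIV_isCont[OF der])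
  qed
  define T where "T = {a..y} \<inter> F -` {..0}"
  have Tcl: "closed T" unfolding T_def by (rule continuous_closed_preimage[OF cont]) auto
  have aT: "a \<in> T" unfolding T_def using Fa ay by auto
  have Tbd: "bdd_above T" unfolding T_def by (rule bdd_aboveI[of _ y]) auto
  define c where "c = Sup T"
  have cT: "c \<in> T" unfolding c_def using closed_contains_Sup[OF _ Tbd Tcl] aT by auto
  have upper: "z \<in> T \<Longrightarrow> z \<le> c" for z unfolding c_def using Tbd by (intro cSup_upper)
  have c1: "a \<le> c" "c \<le> y" "F c \<le> 0" using cT unfolding T_def by auto
  have cy: "c < y" using c1 Fy by (cases "c = y") auto
  show False
  proof (cases "F c = 0")
    case True
    have "F' c < 0" using neg[OF _ True] c1 y by auto
    from DERIV_neg_dec_right[OF der this] c1 y obtain d where d: "d > 0" "\<And>h. h > 0 \<Longrightarrow> h < d \<Longrightarrow> F c > F (c + h)"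
      by auto
    define h where "h = min (d/2) ((y - c)/2)"
    have h: "h > 0" "h < d" "c + h \<le> y" using d cy unfolding h_def by (auto simp: min_def field_simps)
    have "c + h \<in> T" unfolding T_def using h d(2)[of h] True c1 by auto
    thus False using upper[of "c+h"] h by auto
  next
    case False
    hence "F c < 0" using c1 by auto
    have "continuous_on {c..y} F" by (rule continuous_on_subset[OF cont]) (use c1 in auto)
    from IVT'[of F c 0 y, OF _ _ _ this] \<open>F c < 0\<close> Fy cy obtain z where z: "c \<le> z" "z \<le> y" "F z = 0"
      by auto
    have "z \<in> T" unfolding T_def using z c1 by auto
    hence "z \<le> c" by (rule upper)
    with z \<open>F c < 0\<close> show False by auto
  qed
qed

lemma no_upcross:
  fixes F F' :: "real \<Rightarrow> real"
  assumes ab: "a < b"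
    and der: "\<And>x. x \<in> {a..b} \<Longrightarrow> (F has_real_derivative F' x) (at x)"
    and neg: "\<And>x. x \<in> {a..b} \<Longrightarrow> F x = 0 \<Longrightarrow> F' x < 0"
    and Fa: "F a \<le> 0"
  shows "F b < 0"
proof -
  have le: "\<And>y. y \<in> {a..b} \<Longrightarrow> F y \<le> 0" by (rule no_upcross_aux[OF der neg Fa])
  show ?thesis
  proof (rule ccontr)
    assume "\<not> F b < 0"
    hence Fb: "F b = 0" using le[of b] ab by auto
    have "F' b < 0" using neg[OF _ Fb] ab by auto
    from DERIV_neg_dec_left[OF der this] ab obtain d where d: "d > 0" "\<And>h. h > 0 \<Longrightarrow> h < d \<Longrightarrow> F b < F (b - h)"
      by auto
    define h where "h = min (d/2) ((b - a)/2)"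
    have h: "h > 0" "h < d" "a \<le> b - h" using d ab unfolding h_def by (auto simp: min_def field_simps)
    have "F (b - h) > 0" using d(2)[OF h(1,2)] Fb by simp
    moreover have "F (b - h) \<le> 0" using le[of "b - h"] h by auto
    ultimately show False by simp
  qed
qed

lemma strict_concave_from_deriv:
  fixes f f' :: "real \<Rightarrow> real"
  assumes der: "\<And>x. x > 0 \<Longrightarrow> (f has_real_derivative f' x) (at x)"
    and dec: "\<And>x y. 0 < x \<Longrightarrow> x < y \<Longrightarrow> f' y < f' x"
  shows "strictly_concave_on {0<..} f"
proof -
  have main: "f ((1 - u) * x + u * y) > (1 - u) * f x + u * f y"
    if xy: "0 < x" "x < y" and u: "0 < u" "u < 1" for x y u
  proof -
    define z where "z = (1 - u) * x + u * y"
    have zx: "z - x = u * (y - x)" and yz: "y - z = (1 - u) * (y - x)" unfolding z_def by (auto simp: algebra_simps)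
    have "u * (y - x) > 0" "(1 - u) * (y - x) > 0" using xy u by auto
    hence z: "x < z" "z < y" by (simp_all only: zx[symmetric] yz[symmetric])
    obtain \<xi>1 where 1: "x < \<xi>1" "\<xi>1 < z" "f z - f x = (z - x) * f' \<xi>1"
      using MVT2[OF z(1), of f f'] der xy z by force
    obtain \<xi>2 where 2: "z < \<xi>2" "\<xi>2 < y" "f y - f z = (y - z) * f' \<xi>2"
      using MVT2[OF z(2), of f f'] der xy z by force
    have lt: "f' \<xi>2 < f' \<xi>1" using dec[of \<xi>1 \<xi>2] 1 2 xy by auto
    have "f z - ((1 - u) * f x + u * f y) = (1 - u) * (f z - f x) - u * (f y - f z)" by (simp add: algebra_simps)
    also have "\<dots> = (1-u)*((z-x)*f' \<xi>1) - u*((y-z)*f' \<xi>2)" by (simp only: 1(3) 2(3))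
    also have "\<dots> = (1-u)*((u*(y-x))*f' \<xi>1) - u*(((1-u)*(y-x))*f' \<xi>2)" by (simp only: zx yz)
    also have "\<dots> = (1 - u) * u * (y - x) * (f' \<xi>1 - f' \<xi>2)" by (simp add: algebra_simps)
    also have "\<dots> > 0" using u xy lt by (intro mult_pos_pos) auto
    finally show ?thesis unfolding z_def by simp
  qed
  show ?thesis unfolding strictly_concave_on_def
  proof (intro ballI impI allI)
    fix x y u :: real assume x: "x \<in> {0<..}" and y: "y \<in> {0<..}" and ne: "x \<noteq> y" and u: "0 < u \<and> u < 1"
    show "(1 - u) * f x + u * f y < f ((1 - u) * x + u * y)"
    proof (cases "x < y")
      case True thus ?thesis using main[of x y u] x u by auto
    next
      case False
      hence "y < x" using ne by auto
      hence "u * f y + (1 - u) * f x < f (u * y + (1 - u) * x)"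
        using main[of y x "1 - u"] y u by auto
      thus ?thesis by (simp add: algebra_simps)
    qed
  qed
qed


definition q :: "real \<Rightarrow> real \<Rightarrow> real" where
  "q a x = x * J a 1 x / J a 0 x"

definition FF :: "real \<Rightarrow> real \<Rightarrow> real" where
  "FF a x = (q a x)^2 - q a x - x^2 - a^2 + a + 1"

lemma q_ge_x: "x > 0 \<Longrightarrow> q a x \<ge> x"
proof -
  assume x: "x > 0"
  have "J a 0 x \<le> J a 1 x" unfolding J_def
  proof (rule LT_mono[OF admissible_J admissible_J x])
    fix t :: real assume "t > 0"
    have "cosh (a*t) \<ge> 0" using cosh_real_pos[of "a*t"] by linarith
    moreover have "cosh t \<ge> 1" by (rule cosh_real_ge_1)
    ultimately show "cosh t ^ 0 * cosh (a*t) \<le> cosh t ^ 1 * cosh (a*t)"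
      by (simp add: mult_left_mono[of 1 "cosh t" "cosh (a*t)", simplified] mult.commute)
  qed
  moreover have "J a 0 x > 0" using J_pos[OF x] .
  ultimately show ?thesis unfolding q_def using x by (simp add: field_simps)
qed

lemma q_ge_a: "x > 0 \<Longrightarrow> q a x \<ge> a"
proof -
  assume x: "x > 0"
  have "S a x \<le> J a 1 x" unfolding J_def S_def
  proof (rule LT_mono[OF admissible_S admissible_J x])
    fix t :: real assume "t > 0"
    have "sinh t * sinh (a*t) \<le> \<bar>sinh t\<bar> * \<bar>sinh (a*t)\<bar>" by (metis abs_ge_self abs_mult)
    also have "\<dots> \<le> cosh t * cosh (a*t)" by (intro mult_mono abs_sinh_le_cosh) auto
    finally show "sinh t * sinh (a*t) \<le> cosh t ^ 1 * cosh (a*t)" by simp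
  qed
  moreover have "J a 0 x > 0" using J_pos[OF x] .
  moreover have "a * J a 0 x = x * S a x" by (rule I1[OF x])
  ultimately have "a * J a 0 x \<le> x * J a 1 x" using x by (simp add: mult_left_mono)
  thus ?thesis unfolding q_def using \<open>J a 0 x > 0\<close> by (simp add: field_simps)
qed

lemma q_deriv: "x > 0 \<Longrightarrow> (q a has_real_derivative ((q a x)^2 - a^2)/x - x) (at x)"
proof -
  assume x: "x > 0"
  have pos: "J a 0 x > 0" by (rule J_pos[OF x])
  have J2: "J a 2 x = J a 1 x / x + J a 0 x + a^2 * J a 0 x / x^2" by (rule J2_eq[OF x])
  have qf: "q a = (\<lambda>x. x * J a 1 x / J a 0 x)" by (rule ext) (simp add: q_def)
  have d1: "(J a 1 has_real_derivative - J a 2 x) (at x)"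
  proof -
    have "Suc 1 = (2::nat)" by simp
    thus ?thesis using J_deriv[OF x, of a 1] by (simp only:)
  qed
  have d0: "(J a 0 has_real_derivative - J a 1 x) (at x)" using J_deriv[OF x, of a 0] by simp
  have ne: "J a 0 x \<noteq> 0" using pos by simp
  show ?thesis unfolding qf
    by (rule DERIV_cong[OF DERIV_divide[OF DERIV_mult[OF DERIV_ident d1] d0 ne]])
       (use pos x in \<open>simp add: J2 q_def field_simps power2_eq_square\<close>)
qed


definition FFd :: "real \<Rightarrow> real \<Rightarrow> real" where
  "FFd a x = (2 * q a x - 1) * (((q a x)^2 - a^2)/x - x) - 2 * x"

lemma FF_deriv: "x > 0 \<Longrightarrow> (FF a has_real_derivative FFd a x) (at x)"
proof -
  assume x: "x > 0"
  have qf: "FF a = (\<lambda>x. (q a x)^2 - q a x - x^2 - a^2 + a + 1)" by (rule ext) (simp add: FF_def)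
  show ?thesis unfolding qf FFd_def
    by (rule derivative_eq_intros q_deriv[OF x] | simp)+ (use x in \<open>simp add: field_simps\<close>)
qed

lemma FF_zero_neg:
  assumes x: "x > 0" and a: "a \<ge> 0" and z: "FF a x = 0"
  shows "FFd a x < 0"
proof -
  define Q where "Q = q a x"
  have Qa: "Q \<ge> a" unfolding Q_def by (rule q_ge_a[OF x])
  have hx2: "x^2 = Q^2 - Q - a^2 + a + 1" using z unfolding FF_def Q_def by simp
  have e1: "x * FFd a x = (2*Q - 1) * (Q^2 - a^2 - x^2) - 2 * x^2"
    unfolding FFd_def Q_def[symmetric] using x by (simp add: field_simps power2_eq_square)
  also have "\<dots> = (2*Q - 1) * (Q - a - 1) - 2 * (Q^2 - Q - a^2 + a + 1)" by (simp only: hx2) simp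
  also have "\<dots> = (2*a + 1) * (a - 1 - Q)" by (simp add: algebra_simps power2_eq_square)
  also have "\<dots> < 0" using Qa a by (intro mult_pos_neg) auto
  finally have "x * FFd a x < 0" .
  thus ?thesis using x by (simp add: mult_less_0_iff)
qed

lemma FF_pos:
  assumes a: "a \<ge> 0" and x0: "x0 > 0"
  shows "FF a x0 > 0"
proof (rule ccontr)
  assume "\<not> FF a x0 > 0"
  hence F0: "FF a x0 \<le> 0" by simp
  have neg: "FF a y < 0" if y: "y > x0" for y
  proof (rule no_upcross[OF y])
    fix z assume "z \<in> {x0..y}"
    hence z: "z > 0" using x0 by auto
    show "(FF a has_real_derivative FFd a z) (at z)" by (rule FF_deriv[OF z])
    show "FF a z = 0 \<Longrightarrow> FFd a z < 0" by (rule FF_zero_neg[OF z a])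
  qed (rule F0)
  have qb: "q a y < y + a + 1" if y: "y > x0" for y
  proof (rule ccontr)
    assume "\<not> q a y < y + a + 1"
    hence qr: "q a y \<ge> y + a + 1" by simp
    define r where "r = y + a + 1"
    have ypos: "y > 0" using y x0 by simp
    have "(q a y - r) * (q a y + r - 1) \<ge> 0" using qr ypos a unfolding r_def by (intro mult_nonneg_nonneg) auto
    hence "(q a y)^2 - q a y \<ge> r^2 - r" by (simp add: algebra_simps power2_eq_square)
    hence "FF a y \<ge> y * (2*a + 1) + 2*a + 1" unfolding FF_def r_def by (simp add: algebra_simps power2_eq_square)
    moreover have "y * (2*a + 1) + 2*a + 1 > 0" using ypos a by (simp add: add_pos_nonneg)
    ultimately show False using neg[OF y] by simp
  qed
  define g where "g y = (q a y - y - a - 1) / y" for y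
  have gder: "(g has_real_derivative FF a y / y^2) (at y)" if y: "y > 0" for y
  proof -
    have gf: "g = (\<lambda>y. (q a y - y - a - 1) / y)" by (rule ext) (simp add: g_def)
    show ?thesis unfolding gf
      by (rule DERIV_cong[OF DERIV_divide[OF DERIV_diff[OF DERIV_diff[OF DERIV_diff[OF q_deriv[OF y] DERIV_ident] DERIV_const] DERIV_const] DERIV_ident]])
         (use y in \<open>simp_all add: FF_def field_simps power2_eq_square\<close>)
  qed
  define x1 where "x1 = x0 + 1"
  have x1: "x1 > x0" "x1 > 0" unfolding x1_def using x0 by auto
  have gx1: "g x1 < 0" unfolding g_def using qb[OF x1(1)] x1 by (simp add: divide_neg_pos)
  define X where "X = x1 + (a + 1) / (- g x1) + 1"
  have Xx1: "X > x1" unfolding X_def using gx1 a by (simp add: divide_pos_pos add_pos_pos)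
  have "g X \<le> g x1"
  proof (rule DERIV_nonpos_imp_nonincreasing[of x1 X g])
    show "x1 \<le> X" using Xx1 by simp
    fix y assume y: "x1 \<le> y" "y \<le> X"
    have ypos: "y > 0" and yx0: "y > x0" using y x1 by auto
    have "FF a y / y^2 \<le> 0" using neg[OF yx0] ypos by (intro divide_nonpos_pos) auto
    thus "\<exists>d. (g has_real_derivative d) (at y) \<and> d \<le> 0"
      using gder[OF ypos] by blast
  qed
  have Xpos: "X > 0" using Xx1 x1 by simp
  have "q a X - X - a - 1 = X * g X" unfolding g_def using Xpos by simp
  also have "\<dots> \<le> X * g x1" using \<open>g X \<le> g x1\<close> Xpos by (simp add: mult_left_mono)
  also have "X * g x1 < - (a + 1)"
  proof -
    have "X > (a + 1) / (- g x1)" unfolding X_def using x1 by simp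
    moreover have G: "- g x1 > 0" using gx1 by simp
    ultimately have "a + 1 < X * (- g x1)" using pos_divide_less_eq[OF G, of "a+1" X] by blast
    thus ?thesis by simp
  qed
  finally have "q a X < X" by simp
  with q_ge_x[OF Xpos, of a] show False by simp
qed


theorem theorem3:
  fixes nu :: real
  assumes "nu \<ge> 3 / 2"
  shows "strictly_log_concave_on {0<..} (\<lambda>x. - deriv (calK nu) x)"
proof -
  define mu where "mu = nu - 1"
  have mu: "mu \<ge> 0" using assms unfolding mu_def by simp
  have nu: "nu = mu + 1" unfolding mu_def by simp
  define c where "c = 2 powr (nu - 1) * Gamma nu"
  have c: "c > 0" unfolding c_def using assms by (intro mult_pos_pos Gamma_real_pos) auto
  have H: "- deriv (calK nu) x = c * x powr nu * J mu 0 x" if x: "x > 0" for x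
    unfolding c_def mu_def by (rule neg_deriv_calK[OF x])
  have Hpos: "- deriv (calK nu) x > 0" if x: "x > 0" for x
    unfolding H[OF x] using c x J_pos[OF x, of mu 0] by simp
  define Lf where "Lf x = ln c + nu * ln x + ln (J mu 0 x)" for x
  have eqln: "ln (- deriv (calK nu) x) = Lf x" if x: "x > 0" for x
    unfolding H[OF x] Lf_def using c x J_pos[OF x, of mu 0] by (simp add: ln_mult ln_powr)
  define phi where "phi x = (nu - q mu x) / x" for x
  have Lder: "(Lf has_real_derivative phi x) (at x)" if x: "x > 0" for x
  proof -
    have Lf: "Lf = (\<lambda>x. ln c + nu * ln x + ln (J mu 0 x))" by (rule ext) (simp add: Lf_def)
    have d0: "(J mu 0 has_real_derivative - J mu 1 x) (at x)" using J_deriv[OF x, of mu 0] by simp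
    have pos: "J mu 0 x > 0" by (rule J_pos[OF x])
    show ?thesis unfolding Lf
      by (rule DERIV_cong[OF DERIV_add[OF DERIV_add[OF DERIV_const DERIV_cmult[OF DERIV_ln[OF x]]] DERIV_chain2[OF DERIV_ln[OF pos] d0]]])
         (use x pos in \<open>simp add: phi_def q_def field_simps\<close>)
  qed
  have phider: "(phi has_real_derivative - FF mu x / x^2) (at x)" if x: "x > 0" for x
  proof -
    have pf: "phi = (\<lambda>x. (nu - q mu x) / x)" by (rule ext) (simp add: phi_def)
    show ?thesis unfolding pf
      by (rule DERIV_cong[OF DERIV_divide[OF DERIV_diff[OF DERIV_const q_deriv[OF x]] DERIV_ident]])
         (use x in \<open>simp_all add: FF_def nu field_simps power2_eq_square\<close>)
  qed
  have dec: "phi y < phi x" if xy: "0 < x" "x < y" for x y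
  proof -
    have "phi x > phi y"
    proof (rule DERIV_neg_imp_decreasing[OF xy(2)])
      fix z assume "x \<le> z" "z \<le> y"
      hence z: "z > 0" using xy by simp
      have "FF mu z / z^2 > 0" using FF_pos[OF mu z] z by simp
      thus "\<exists>d. (phi has_real_derivative d) (at z) \<and> d < 0" using phider[OF z] by auto
    qed
    thus ?thesis by simp
  qed
  have sc: "strictly_concave_on {0<..} Lf" by (rule strict_concave_from_deriv[OF Lder dec]) auto
  have "strictly_concave_on {0<..} (\<lambda>x. ln (- deriv (calK nu) x))"
    unfolding strictly_concave_on_def
  proof (intro ballI impI allI)
    fix x y u :: real assume x: "x \<in> {0<..}" and y: "y \<in> {0<..}" and ne: "x \<noteq> y" and u: "0 < u \<and> u < 1"
    have z: "(1 - u) * x + u * y > 0" using x y u by (intro add_nonneg_pos) auto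
    have "(1 - u) * Lf x + u * Lf y < Lf ((1 - u) * x + u * y)"
      using sc x y ne u unfolding strictly_concave_on_def by blast
    thus "(1 - u) * ln (- deriv (calK nu) x) + u * ln (- deriv (calK nu) y)
          < ln (- deriv (calK nu) ((1 - u) * x + u * y))"
      using eqln[of x] eqln[of y] eqln[OF z] x y by simp
  qed
  thus ?thesis unfolding strictly_log_concave_on_def using Hpos by auto
qed

end
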